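(* Let $N\ge 1$, let $\mathbf{x}\in\mathbb{R}^N$ and let $\mathcal{F}=\mathrm{DFT}(\mathbf{x})\in\mathbb{C}^N$ be its frequency spectrum. Let $\mathbf{W}\in\mathbb{C}^{N\times N}$ be a weight matrix and $\mathbf{b}\in\mathbb{C}^N$ a bias vector, and set $\tilde{\mathcal{F}}=\mathbf{W}\mathcal{F}+\mathbf{b}$. For $i=0,1,\dots,N-1$ define $$w_i=\left[\mathrm{diag}(\mathbf{W},i),\ \mathrm{diag}(\mathbf{W},i-N)\right]\in\mathbb{C}^N,\qquad \Omega_i=\mathrm{IDFT}(w_i)\in\mathbb{C}^N,$$ $$\mathcal{M}_i(\mathbf{x})=\mathbf{x}\odot\left[e^{-j\frac{2\pi}{N}ik}\right]_{k=0,1,\dots,N-1}\in\mathbb{C}^N .$$ Then $$\mathrm{IDFT}(\tilde{\mathcal{F}})=\sum_{i=0}^{N-1}\Omega_i\circledast\mathcal{M}_i(\mathbf{x})+\mathrm{IDFT}(\mathbf{b}),$$ i.e. $\tilde{\mathcal{F}}=\mathbf{W}\mathcal{F}+\mathbf{b}$ and $\sum_{i=0}^{N-1}\Omega_i\circledast\mathcal{M}_i(\mathbf{x})+\mathrm{IDFT}(\mathbf{b})$ form a DFT pair.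
   Context: Vectors are indexed from $0$ to $N-1$ and $j$ denotes the imaginary unit. The discrete Fourier transform of $\mathbf{x}\in\mathbb{C}^N$ is $\mathrm{DFT}(\mathbf{x})[k]=\sum_{n=0}^{N-1}e^{-j\frac{2\pi}{N}nk}\mathbf{x}[n]$, and the inverse is $\mathrm{IDFT}(\mathcal{F})[n]=\frac{1}{N}\sum_{k=0}^{N-1}\mathcal{F}[k]e^{j\frac{2\pi}{N}kn}$. The symbol $\circledast$ denotes circular convolution, $(\mathbf{u}\circledast\mathbf{v})[n]=\sum_{m=0}^{N-1}\mathbf{u}[m]\mathbf{v}[(n-m)\bmod N]$; $\odot$ is the Hadamard (element-wise) product; $[\cdot,\cdot]$ denotes concatenation of two vectors. For an integer $i$ with $|i|<N$, $\mathrm{diag}(\mathbf{W},i)\in\mathbb{C}^{N-|i|}$ is the $i$-th diagonal of $\mathbf{W}$: for $i\ge 0$ it is $(\mathbf{W}[0,i],\mathbf{W}[1,i+1],\dots,\mathbf{W}[N-1-i,N-1])$ (the main diagonal for $i=0$, a diagonal above it for $i>0$), and for $i<0$ it is $(\mathbf{W}[-i,0],\mathbf{W}[-i+1,1],\dots,\mathbf{W}[N-1,N-1+i])$ (a diagonal below the main one); by convention $\mathrm{diag}(\mathbf{W},-N)=\emptyset$ (the empty vector). $\mathcal{M}_i(\mathbf{x})$ is called the $i$-th modulated version of $\mathbf{x}$, with $\mathcal{M}_0(\mathbf{x})=\mathbf{x}$. *)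

theory Defs
  imports Complex_Main
begin

(* Vectors in C^N are represented as functions nat => complex, only indices 0..N-1 matter.
   Matrices as nat => nat => complex, W r c = W[r,c]. *)

definition DFT :: "nat \<Rightarrow> (nat \<Rightarrow> complex) \<Rightarrow> nat \<Rightarrow> complex" where
  "DFT N x k = (\<Sum>n<N. exp (- \<i> * of_real (2 * pi / real N) * of_nat (n * k)) * x n)"

definition IDFT :: "nat \<Rightarrow> (nat \<Rightarrow> complex) \<Rightarrow> nat \<Rightarrow> complex" where
  "IDFT N F n = (1 / of_nat N) * (\<Sum>k<N. F k * exp (\<i> * of_real (2 * pi / real N) * of_nat (k * n)))"

definition cconv :: "nat \<Rightarrow> (nat \<Rightarrow> complex) \<Rightarrow> (nat \<Rightarrow> complex) \<Rightarrow> nat \<Rightarrow> complex" where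
  "cconv N u v n = (\<Sum>m<N. u m * v (nat ((int n - int m) mod int N)))"

(* i-th diagonal of the N x N matrix W, as a list of length N - |i| (empty for i = -N) *)
definition diag :: "nat \<Rightarrow> (nat \<Rightarrow> nat \<Rightarrow> complex) \<Rightarrow> int \<Rightarrow> complex list" where
  "diag N W i = (if i \<ge> 0 then map (\<lambda>t. W t (t + nat i)) [0..<N - nat i]
                 else map (\<lambda>t. W (t + nat (- i)) t) [0..<N - nat (- i)])"

definition wvec :: "nat \<Rightarrow> (nat \<Rightarrow> nat \<Rightarrow> complex) \<Rightarrow> nat \<Rightarrow> nat \<Rightarrow> complex" where
  "wvec N W i k = (diag N W (int i) @ diag N W (int i - int N)) ! k"

definition Omega :: "nat \<Rightarrow> (nat \<Rightarrow> nat \<Rightarrow> complex) \<Rightarrow> nat \<Rightarrow> nat \<Rightarrow> complex" where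
  "Omega N W i = IDFT N (wvec N W i)"

definition modul :: "nat \<Rightarrow> nat \<Rightarrow> (nat \<Rightarrow> complex) \<Rightarrow> nat \<Rightarrow> complex" where
  "modul N i x k = x k * exp (- \<i> * of_real (2 * pi / real N) * of_nat (i * k))"

end

theory Submission imports Defs "HOL-Analysis.Analysis" begin

definition EE :: "nat \<Rightarrow> int \<Rightarrow> complex" where
  "EE N a = exp (\<i> * of_real (2 * pi / real N) * of_int a)"

lemma EE_add: "EE N (a + b) = EE N a * EE N b"
  unfolding EE_def by (simp add: ring_distribs exp_add)

lemma EE_N: assumes "N > 0" shows "EE N (int N * q) = 1"
proof -
  have "\<i> * of_real (2 * pi / real N) * of_int (int N * q) = (2 * of_int q * pi) * \<i>"
    using assms by (simp add: field_simps)
  then show ?thesis unfolding EE_def using exp_integer_2pi[of "of_int q"] by simp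
qed

lemma EE_mod: assumes "N > 0" shows "EE N (a mod int N) = EE N a"
proof -
  have "a = a mod int N + int N * (a div int N)" by simp
  then have "EE N a = EE N (a mod int N) * EE N (int N * (a div int N))"
    by (metis EE_add)
  then show ?thesis using EE_N[OF assms] by simp
qed

lemma EE_neg: "exp (- \<i> * of_real (2 * pi / real N) * of_nat m) = EE N (- int m)"
  unfolding EE_def by simp
lemma EE_pos: "exp (\<i> * of_real (2 * pi / real N) * of_nat m) = EE N (int m)"
  unfolding EE_def by simp

lemma wvec_eq: assumes "k < N" "i < N"
  shows "wvec N W i k = W k ((k + i) mod N)"
proof (cases "k < N - i")
  case True
  then show ?thesis using assms unfolding wvec_def diag_def
    by (simp add: nth_append)
next
  case False
  then have "i > 0" using assms by auto
  then have d: "diag N W (int i - int N) = map (\<lambda>t. W (t + (N - i)) t) [0..<i]"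
    using assms unfolding diag_def by (simp add: nat_diff_distrib)
  have "(k + i) mod N = k + i - N" using assms False
    by (simp add: mod_if)
  moreover have "k + i - N < i" using assms \<open>0 < i\<close> by linarith
  ultimately show ?thesis using assms False unfolding wvec_def d
    by (simp add: nth_append diag_def)
qed

lemma bij_sub: assumes "N > 0" "n < N"
  shows "bij_betw (\<lambda>m. nat ((int n - int m) mod int N)) {..<N} {..<N}"
proof (rule bij_betw_imageI)
  show "inj_on (\<lambda>m. nat ((int n - int m) mod int N)) {..<N}"
  proof (rule inj_onI)
    fix a b assume "a \<in> {..<N}" "b \<in> {..<N}" "nat ((int n - int a) mod int N) = nat ((int n - int b) mod int N)"
    then have "(int n - int a) mod int N = (int n - int b) mod int N" "int a < int N" "int b < int N"
      using assms by (auto simp: eq_nat_nat_iff)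
    then have "(int n - (int n - int a) mod int N) mod int N = (int n - (int n - int b) mod int N) mod int N"
      by simp
    then have "int a mod int N = int b mod int N"
      by (simp add: mod_diff_right_eq)
    then show "a = b" using \<open>int a < int N\<close> \<open>int b < int N\<close> by simp
  qed
  show "(\<lambda>m. nat ((int n - int m) mod int N)) ` {..<N} = {..<N}"
  proof
    show "(\<lambda>m. nat ((int n - int m) mod int N)) ` {..<N} \<subseteq> {..<N}"
      using assms by (auto simp: nat_less_iff)
    show "{..<N} \<subseteq> (\<lambda>m. nat ((int n - int m) mod int N)) ` {..<N}"
    proof
      fix l assume l: "l \<in> {..<N}"
      let ?m = "nat ((int n - int l) mod int N)"
      have "?m < N" using assms by (auto simp: nat_less_iff)
      moreover have "nat ((int n - int ?m) mod int N) = l"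
      proof -
        have "(int n - int ?m) mod int N = (int n - (int n - int l)) mod int N"
          using assms by (simp add: mod_diff_right_eq)
        then show ?thesis using l by simp
      qed
      ultimately show "l \<in> (\<lambda>m. nat ((int n - int m) mod int N)) ` {..<N}"
        by (intro image_eqI[where x="?m"]) auto
    qed
  qed
qed

lemma bij_rot: fixes k N :: nat assumes "N > 0" "k < N"
  shows "bij_betw (\<lambda>i. (k + i) mod N) {..<N} {..<N}"
proof -
  have inj: "inj_on (\<lambda>i. (k + i) mod N) {..<N}"
  proof (rule inj_onI)
    fix a b assume "a \<in> {..<N}" "b \<in> {..<N}" "(k + a) mod N = (k + b) mod N"
    then have "(int k + int a) mod int N = (int k + int b) mod int N"
      by (metis of_nat_add zmod_int)
    then have "((int k + int a) mod int N - int k) mod int N = ((int k + int b) mod int N - int k) mod int N"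
      by simp
    then have "int a mod int N = int b mod int N" by (simp add: mod_diff_left_eq)
    then show "a = b" using \<open>a \<in> {..<N}\<close> \<open>b \<in> {..<N}\<close> by simp
  qed
  have "(\<lambda>i. (k + i) mod N) ` {..<N} \<subseteq> {..<N}" using assms by auto
  then show ?thesis using inj endo_inj_surj[of "{..<N}"] by (simp add: bij_betw_def)
qed


lemma EE_cong: assumes "N > 0" "a mod int N = b mod int N" shows "EE N a = EE N b"
  using EE_mod[OF assms(1), of a] EE_mod[OF assms(1), of b] assms(2) by simp

theorem theorem1:
  fixes N :: nat and x :: "nat \<Rightarrow> real" and W :: "nat \<Rightarrow> nat \<Rightarrow> complex"
    and b :: "nat \<Rightarrow> complex"
  assumes "N \<ge> 1"
  defines "F \<equiv> DFT N (\<lambda>n. complex_of_real (x n))"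
  defines "Ft \<equiv> (\<lambda>k. (\<Sum>m<N. W k m * F m) + b k)"
  shows "\<forall>n<N. IDFT N Ft n =
           (\<Sum>i<N. cconv N (Omega N W i) (modul N i (\<lambda>n. complex_of_real (x n))) n)
           + IDFT N b n"
proof (intro allI impI)
  fix n assume n: "n < N"
  have N0: "N > 0" using assms(1) by simp
  define X where "X = (\<lambda>n. complex_of_real (x n))"
  define L where "L = (\<lambda>m. nat ((int n - int m) mod int N))"
  have F_eq: "F m = (\<Sum>l<N. EE N (- (int l * int m)) * X l)" for m
    unfolding F_def DFT_def X_def EE_neg by simp
  have Fper: "F ((k + i) mod N) = (\<Sum>l<N. EE N (- (int l * (int k + int i))) * X l)" for k i
    unfolding F_eq
  proof (rule sum.cong[OF refl])
    fix l
    have e1: "int ((k + i) mod N) = (int k + int i) mod int N"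
      by (simp add: zmod_int)
    have "(- (int l * int ((k + i) mod N))) mod int N = (- (int l * ((int k + int i) mod int N))) mod int N"
      unfolding e1 ..
    also have "... = (- ((int l * ((int k + int i) mod int N)) mod int N)) mod int N"
      by (rule mod_minus_eq[symmetric])
    also have "... = (- ((int l * (int k + int i)) mod int N)) mod int N"
      by (simp only: mod_mult_right_eq)
    also have "... = (- (int l * (int k + int i))) mod int N"
      by (rule mod_minus_eq)
    finally have "EE N (- (int l * int ((k + i) mod N))) = EE N (- (int l * (int k + int i)))"
      by (rule EE_cong[OF N0])
    then show "EE N (- (int l * int ((k + i) mod N))) * X l = EE N (- (int l * (int k + int i))) * X l"
      by (rule arg_cong)
  qed
  have stepA: "cconv N (Omega N W i) (modul N i X) n
      = (1 / of_nat N) * (\<Sum>k<N. wvec N W i k * EE N (int k * int n) * F ((k + i) mod N))" for i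
  proof -
    have "cconv N (Omega N W i) (modul N i X) n
        = (\<Sum>m<N. (1 / of_nat N) * (\<Sum>k<N. wvec N W i k * EE N (int k * int m)) * (X (L m) * EE N (- (int i * int (L m)))))"
      unfolding cconv_def Omega_def IDFT_def modul_def L_def EE_neg EE_pos by simp
    also have "\<dots> = (\<Sum>m<N. (1 / of_nat N) * (\<Sum>k<N. wvec N W i k * EE N (int k * int n) * (EE N (- (int (L m) * (int k + int i))) * X (L m))))"
    proof (rule sum.cong[OF refl])
      fix m assume m: "m \<in> {..<N}"
      have key: "EE N (int k * int m) * EE N (- (int i * int (L m))) = EE N (int k * int n) * EE N (- (int (L m) * (int k + int i)))" for k
      proof -
        have d1: "int N dvd (int (L m) - (int n - int m))"
          unfolding L_def using N0 by (simp add: mod_eq_dvd_iff[symmetric])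
        have "(int k * int m + - (int i * int (L m))) mod int N = (int k * int n + - (int (L m) * (int k + int i))) mod int N"
          unfolding mod_eq_dvd_iff
        proof -
          have "int k * int m + - (int i * int (L m)) - (int k * int n + - (int (L m) * (int k + int i)))
              = int k * (int (L m) - (int n - int m))" by (simp add: algebra_simps)
          then show "int N dvd int k * int m + - (int i * int (L m)) - (int k * int n + - (int (L m) * (int k + int i)))"
            using d1 by simp
        qed
        then have "EE N (int k * int m + - (int i * int (L m))) = EE N (int k * int n + - (int (L m) * (int k + int i)))"
          by (rule EE_cong[OF N0])
        then show ?thesis by (simp only: EE_add)
      qed
      show "(1 / of_nat N) * (\<Sum>k<N. wvec N W i k * EE N (int k * int m)) * (X (L m) * EE N (- (int i * int (L m))))
          = (1 / of_nat N) * (\<Sum>k<N. wvec N W i k * EE N (int k * int n) * (EE N (- (int (L m) * (int k + int i))) * X (L m)))"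
        unfolding sum_distrib_right mult.assoc[of "1 / of_nat N"]
        by (intro arg_cong[where f="\<lambda>z. (1 / of_nat N) * z"] sum.cong refl)
           (metis (no_types, lifting) key mult.assoc mult.commute mult.left_commute)
    qed
    also have "\<dots> = (1 / of_nat N) * (\<Sum>k<N. wvec N W i k * EE N (int k * int n) * (\<Sum>m<N. EE N (- (int (L m) * (int k + int i))) * X (L m)))"
    proof -
      have "(\<Sum>m<N. (1 / of_nat N) * (\<Sum>k<N. wvec N W i k * EE N (int k * int n) * (EE N (- (int (L m) * (int k + int i))) * X (L m))))
          = (1 / of_nat N) * (\<Sum>m<N. \<Sum>k<N. wvec N W i k * EE N (int k * int n) * (EE N (- (int (L m) * (int k + int i))) * X (L m)))"
        by (rule sum_distrib_left[symmetric])
      also have "\<dots> = (1 / of_nat N) * (\<Sum>k<N. \<Sum>m<N. wvec N W i k * EE N (int k * int n) * (EE N (- (int (L m) * (int k + int i))) * X (L m)))"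
        by (rule arg_cong[OF sum.swap])
      also have "\<dots> = (1 / of_nat N) * (\<Sum>k<N. wvec N W i k * EE N (int k * int n) * (\<Sum>m<N. EE N (- (int (L m) * (int k + int i))) * X (L m)))"
        by (intro arg_cong[where f="\<lambda>z. (1 / of_nat N) * z"] sum.cong refl) (rule sum_distrib_left[symmetric])
      finally show ?thesis .
    qed
    also have "\<dots> = (1 / of_nat N) * (\<Sum>k<N. wvec N W i k * EE N (int k * int n) * F ((k + i) mod N))"
    proof -
      have "(\<Sum>m<N. EE N (- (int (L m) * (int k + int i))) * X (L m)) = F ((k + i) mod N)" for k
        unfolding Fper L_def
        by (rule sum.reindex_bij_betw[OF bij_sub[OF N0 n], of "\<lambda>l. EE N (- (int l * (int k + int i))) * X l"])
      then show ?thesis by simp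
    qed
    finally show ?thesis .
  qed
  have "(\<Sum>i<N. cconv N (Omega N W i) (modul N i X) n)
      = (1 / of_nat N) * (\<Sum>i<N. \<Sum>k<N. W k ((k + i) mod N) * F ((k + i) mod N) * EE N (int k * int n))"
    unfolding stepA sum_distrib_left[symmetric]
    by (intro arg_cong[where f="\<lambda>z. (1 / of_nat N) * z"] sum.cong refl) (simp add: wvec_eq)
  also have "\<dots> = (1 / of_nat N) * (\<Sum>k<N. (\<Sum>i<N. W k ((k + i) mod N) * F ((k + i) mod N)) * EE N (int k * int n))"
    by (subst sum.swap) (simp add: sum_distrib_right)
  also have "\<dots> = (1 / of_nat N) * (\<Sum>k<N. (\<Sum>m<N. W k m * F m) * EE N (int k * int n))"
  proof -
    have "(\<Sum>i<N. W k ((k + i) mod N) * F ((k + i) mod N)) = (\<Sum>m<N. W k m * F m)" if "k < N" for k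
      by (rule sum.reindex_bij_betw[OF bij_rot[OF N0 that], of "\<lambda>m. W k m * F m"])
    then show ?thesis by (intro arg_cong[where f="\<lambda>z. (1 / of_nat N) * z"] sum.cong refl) simp
  qed
  finally have R: "(\<Sum>i<N. cconv N (Omega N W i) (modul N i X) n) = (1 / of_nat N) * (\<Sum>k<N. (\<Sum>m<N. W k m * F m) * EE N (int k * int n))" .
  have "IDFT N Ft n = (1 / of_nat N) * (\<Sum>k<N. (\<Sum>m<N. W k m * F m) * EE N (int k * int n)) + IDFT N b n"
    unfolding IDFT_def Ft_def EE_pos by (simp add: ring_distribs sum.distrib)
  then show "IDFT N Ft n = (\<Sum>i<N. cconv N (Omega N W i) (modul N i (\<lambda>n. complex_of_real (x n))) n) + IDFT N b n"
    using R unfolding X_def by simp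
qed

end
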